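(* Let $\mu\in\Delta([N])$, let $(U,\pi)\sim\mathrm{Unif}([0,1])\times\mathrm{Unif}(\Pi)$, and let $Y = \Gamma((U,\pi),\mu)$. Then almost surely $$\frac{1}{C_0}\,\mathrm{Cov}\big(U,\eta(\pi(Y))\mid Y\big) = 1-\mu(Y).$$
   Context: $\Pi$ is the set of permutations of $[N]$ and $\mathrm{Unif}(\Pi)$ the uniform distribution on it (independent of $U$). Decoder: $\Gamma((u,\pi),\mu):=\pi^{-1}(\min\{\pi(i):\mu(\{j:\pi(j)\le\pi(i)\})\ge u\})$. $\eta(i):=(i-1)/(N-1)$ and $C_0:=\mathrm{Var}(\eta(I))$ for $I$ uniform on $[N]$. *)

theory Defs
  imports "HOL-Probability.Probability"
begin

definition perms :: "nat \<Rightarrow> (nat \<Rightarrow> nat) set" where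
  "perms N = {p. p permutes {1..N}}"

definition is_distribution :: "nat \<Rightarrow> (nat \<Rightarrow> real) \<Rightarrow> bool" where
  "is_distribution N mu \<longleftrightarrow> (\<forall>i\<in>{1..N}. mu i \<ge> 0) \<and> (\<Sum>i\<in>{1..N}. mu i) = 1"

definition Gamma :: "nat \<Rightarrow> real \<times> (nat \<Rightarrow> nat) \<Rightarrow> (nat \<Rightarrow> real) \<Rightarrow> nat" where
  "Gamma N up mu =
     (let u = fst up; p = snd up in
      inv_into {1..N} p
        (Min {p i | i. i \<in> {1..N} \<and> (\<Sum>j\<in>{j\<in>{1..N}. p j \<le> p i}. mu j) \<ge> u}))"

definition eta :: "nat \<Rightarrow> nat \<Rightarrow> real" where
  "eta N i = (real i - 1) / (real N - 1)"

definition C0 :: "nat \<Rightarrow> real" where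
  "C0 N = measure_pmf.variance (pmf_of_set {1..N}) (\<lambda>i. eta N i)"

definition UPi :: "nat \<Rightarrow> (real \<times> (nat \<Rightarrow> nat)) measure" where
  "UPi N = uniform_measure lborel {0..1} \<Otimes>\<^sub>M measure_pmf (pmf_of_set (perms N))"

definition cond_exp_event :: "'a measure \<Rightarrow> 'a set \<Rightarrow> ('a \<Rightarrow> real) \<Rightarrow> real" where
  "cond_exp_event M A f = (\<integral>w. indicator A w * f w \<partial>M) / measure M A"

text \<open>Conditional covariance Cov(X, Z | Y) evaluated at the value y of the discrete
  random variable Y, i.e. the covariance under the conditional law given {Y = y}.\<close>
definition cond_cov :: "'a measure \<Rightarrow> ('a \<Rightarrow> real) \<Rightarrow> ('a \<Rightarrow> real) \<Rightarrow> ('a \<Rightarrow> 'b) \<Rightarrow> 'b \<Rightarrow> real" where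
  "cond_cov M X Z Y y =
     (let A = {w \<in> space M. Y w = y} in
      cond_exp_event M A (\<lambda>w. X w * Z w) - cond_exp_event M A X * cond_exp_event M A Z)"

end

theory Submission
  imports Defs
begin


lemma Gamma_dep:
  assumes "\<forall>i\<in>{1..N}. p i = q i"
  shows "Gamma N (u,p) mu = Gamma N (u,q) mu"
proof -
  have c: "(\<Sum>j\<in>{j\<in>{1..N}. p j \<le> p i}. mu j) = (\<Sum>j\<in>{j\<in>{1..N}. q j \<le> q i}. mu j)"
    if "i \<in> {1..N}" for i
  proof -
    have "{j\<in>{1..N}. p j \<le> p i} = {j\<in>{1..N}. q j \<le> q i}" using assms that by auto
    then show ?thesis by simp
  qed
  have s: "{p i |i. i \<in> {1..N} \<and> u \<le> (\<Sum>j\<in>{j\<in>{1..N}. p j \<le> p i}. mu j)}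
        = {q i |i. i \<in> {1..N} \<and> u \<le> (\<Sum>j\<in>{j\<in>{1..N}. q j \<le> q i}. mu j)}"
  proof (rule set_eqI, rule iffI)
    fix x assume "x \<in> {p i |i. i \<in> {1..N} \<and> u \<le> (\<Sum>j\<in>{j\<in>{1..N}. p j \<le> p i}. mu j)}"
    then obtain i where i: "x = p i" "i \<in> {1..N}" "u \<le> (\<Sum>j\<in>{j\<in>{1..N}. p j \<le> p i}. mu j)" by blast
    have "x = q i \<and> i \<in> {1..N} \<and> u \<le> (\<Sum>j\<in>{j\<in>{1..N}. q j \<le> q i}. mu j)"
      using i c[OF i(2)] assms by simp
    then show "x \<in> {q i |i. i \<in> {1..N} \<and> u \<le> (\<Sum>j\<in>{j\<in>{1..N}. q j \<le> q i}. mu j)}"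
      by blast
  next
    fix x assume "x \<in> {q i |i. i \<in> {1..N} \<and> u \<le> (\<Sum>j\<in>{j\<in>{1..N}. q j \<le> q i}. mu j)}"
    then obtain i where i: "x = q i" "i \<in> {1..N}" "u \<le> (\<Sum>j\<in>{j\<in>{1..N}. q j \<le> q i}. mu j)" by blast
    have "x = p i \<and> i \<in> {1..N} \<and> u \<le> (\<Sum>j\<in>{j\<in>{1..N}. p j \<le> p i}. mu j)"
      using i c[OF i(2)] assms by simp
    then show "x \<in> {p i |i. i \<in> {1..N} \<and> u \<le> (\<Sum>j\<in>{j\<in>{1..N}. p j \<le> p i}. mu j)}"
      by blast
  qed
  have inv: "inv_into {1..N} p z = inv_into {1..N} q z" for z
  proof -
    have "(\<lambda>x. x \<in> {1..N} \<and> p x = z) = (\<lambda>x. x \<in> {1..N} \<and> q x = z)" using assms by auto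
    then show ?thesis unfolding inv_into_def by simp
  qed
  have "Gamma N (u,p) mu = inv_into {1..N} p (Min {p i |i. i \<in> {1..N} \<and> u \<le> (\<Sum>j\<in>{j\<in>{1..N}. p j \<le> p i}. mu j)})"
    unfolding Gamma_def Let_def by simp
  also have "\<dots> = inv_into {1..N} p (Min {q i |i. i \<in> {1..N} \<and> u \<le> (\<Sum>j\<in>{j\<in>{1..N}. q j \<le> q i}. mu j)})"
    by (simp only: s)
  also have "\<dots> = inv_into {1..N} q (Min {q i |i. i \<in> {1..N} \<and> u \<le> (\<Sum>j\<in>{j\<in>{1..N}. q j \<le> q i}. mu j)})"
    by (rule inv)
  also have "\<dots> = Gamma N (u,q) mu"
    unfolding Gamma_def Let_def by simp
  finally show ?thesis .
qed

lemma Gamma_u_meas: "(\<lambda>u. Gamma N (u,q) mu) \<in> borel \<rightarrow>\<^sub>M count_space UNIV"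
proof -
  define c where "c i = (\<Sum>j\<in>{j\<in>{1..N}. q j \<le> q i}. mu j)" for i
  define S where "S u = {i\<in>{1..N}. u \<le> c i}" for u :: real
  define H where "H T = inv_into {1..N} q (Min {q i |i. i \<in> T})" for T
  have eq: "Gamma N (u,q) mu = H (S u)" for u
    unfolding Gamma_def H_def S_def c_def Let_def by simp
  have Sm: "S \<in> borel \<rightarrow>\<^sub>M count_space (Pow {1..N})"
    unfolding measurable_count_space_eq2[OF finite_Pow_iff[THEN iffD2, OF finite_atLeastAtMost]]
  proof (intro conjI ballI)
    show "S \<in> space borel \<rightarrow> Pow {1..N}" unfolding S_def by auto
    fix T assume T: "T \<in> Pow {1..N}"
    have "S -` {T} = {u. \<forall>i\<in>{1..N}. (u \<le> c i) = (i \<in> T)}"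
    proof (rule set_eqI)
      fix u
      have "S u = T \<longleftrightarrow> (\<forall>i\<in>{1..N}. (u \<le> c i) = (i \<in> T))"
      proof
        assume "S u = T" then show "\<forall>i\<in>{1..N}. (u \<le> c i) = (i \<in> T)" unfolding S_def by auto
      next
        assume h: "\<forall>i\<in>{1..N}. (u \<le> c i) = (i \<in> T)"
        show "S u = T"
        proof (rule set_eqI)
          fix i show "i \<in> S u \<longleftrightarrow> i \<in> T"
            using h T unfolding S_def by (cases "i \<in> {1..N}") auto
        qed
      qed
      then show "u \<in> S -` {T} \<longleftrightarrow> u \<in> {u. \<forall>i\<in>{1..N}. (u \<le> c i) = (i \<in> T)}" by simp
    qed
    moreover have "{u. \<forall>i\<in>{1..N}. (u \<le> c i) = (i \<in> T)} \<in> sets borel"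
      by measurable
    ultimately show "S -` {T} \<inter> space borel \<in> sets borel" by simp
  qed
  have "(\<lambda>u. H (S u)) \<in> borel \<rightarrow>\<^sub>M count_space UNIV"
    by (rule measurable_compose_countable'[where f="\<lambda>T u. H T" and I="Pow {1..N}", OF measurable_const Sm])
       (simp_all add: countable_finite)
  then show ?thesis using eq by simp
qed

lemma Gamma_meas: "(\<lambda>w. Gamma N w mu) \<in> UPi N \<rightarrow>\<^sub>M count_space UNIV"
proof -
  define K where "K p = map p [1..<N+1]" for p :: "nat \<Rightarrow> nat"
  define lf where "lf l i = l ! (i - 1)" for l :: "nat list" and i
  have eq: "Gamma N w mu = Gamma N (fst w, lf (K (snd w))) mu" for w
  proof -
    have "Gamma N w mu = Gamma N (fst w, snd w) mu" by simp
    also have "\<dots> = Gamma N (fst w, lf (K (snd w))) mu"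
      by (rule Gamma_dep) (auto simp: lf_def K_def simp del: upt_Suc)
    finally show ?thesis .
  qed
  have "(\<lambda>w. Gamma N (fst w, lf (K (snd w))) mu) \<in> UPi N \<rightarrow>\<^sub>M count_space UNIV"
  proof (rule measurable_compose_countable'[where f="\<lambda>l w. Gamma N (fst w, lf l) mu" and I=UNIV])
    fix l :: "nat list"
    have "fst \<in> UPi N \<rightarrow>\<^sub>M borel"
    proof -
      have "fst \<in> UPi N \<rightarrow>\<^sub>M uniform_measure lborel {0..1::real}"
        unfolding UPi_def by (rule measurable_fst)
      then show ?thesis
        by (subst (asm) measurable_cong_sets[OF refl, where N'=borel]) auto
    qed
    then show "(\<lambda>w. Gamma N (fst w, lf l) mu) \<in> UPi N \<rightarrow>\<^sub>M count_space UNIV"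
      using measurable_compose[OF _ Gamma_u_meas] by blast
  next
    show "(\<lambda>w. K (snd w)) \<in> UPi N \<rightarrow>\<^sub>M count_space UNIV"
      unfolding UPi_def
      by (rule measurable_compose[OF measurable_snd]) simp
  qed simp
  then show ?thesis using eq by simp
qed



definition cF :: "nat \<Rightarrow> (nat \<Rightarrow> real) \<Rightarrow> (nat \<Rightarrow> nat) \<Rightarrow> nat \<Rightarrow> real" where
  "cF N mu p i = (\<Sum>j\<in>{j\<in>{1..N}. p j \<le> p i}. mu j)"
definition sF :: "nat \<Rightarrow> (nat \<Rightarrow> real) \<Rightarrow> (nat \<Rightarrow> nat) \<Rightarrow> nat \<Rightarrow> real" where
  "sF N mu p i = (\<Sum>j\<in>{j\<in>{1..N}. p j < p i}. mu j)"

lemma Gamma_min: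
  assumes p: "p permutes {1..N}" and N: "N \<ge> 1" and d: "is_distribution N mu" and u: "u \<le> 1"
  obtains i where "i \<in> {1..N}" "Gamma N (u,p) mu = i" "u \<le> cF N mu p i"
    "\<And>k. k \<in> {1..N} \<Longrightarrow> u \<le> cF N mu p k \<Longrightarrow> p i \<le> p k"
proof -
  define K where "K = {p i |i. i \<in> {1..N} \<and> u \<le> cF N mu p i}"
  have fin: "finite K" unfolding K_def by simp
  define i0 where "i0 = inv p N"
  have i0: "i0 \<in> {1..N}" "p i0 = N"
  proof -
    have "N \<in> {1..N}" using N by simp
    then show "i0 \<in> {1..N}" unfolding i0_def using permutes_in_image[OF permutes_inv[OF p], of N] by blast
    show "p i0 = N" unfolding i0_def using permutes_inverses(1)[OF p, of N] by simp
  qed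
  have pin: "p j \<le> N" if "j \<in> {1..N}" for j
  proof -
    have "p j \<in> {1..N}" using permutes_in_image[OF p, of j] that by blast
    then show ?thesis by simp
  qed
  have "{j\<in>{1..N}. p j \<le> p i0} = {1..N}"
    unfolding i0(2) using pin by blast
  then have "cF N mu p i0 = 1" using d unfolding cF_def is_distribution_def by simp
  then have "p i0 \<in> K" unfolding K_def using i0 u by auto
  then have ne: "K \<noteq> {}" by auto
  have "Min K \<in> K" using Min_in[OF fin ne] .
  then obtain i where i: "i \<in> {1..N}" "u \<le> cF N mu p i" "Min K = p i" unfolding K_def by auto
  have G: "Gamma N (u,p) mu = i"
    unfolding Gamma_def Let_def cF_def
    using i K_def inv_into_f_f[OF permutes_inj_on[OF p] i(1)] unfolding cF_def by simp
  have "p i \<le> p k" if "k \<in> {1..N}" "u \<le> cF N mu p k" for k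
  proof -
    have "p k \<in> K" unfolding K_def using that by auto
    then show ?thesis using Min_le[OF fin] i(3) by metis
  qed
  then show ?thesis using that i G by blast
qed

lemma cF_split:
  assumes p: "p permutes {1..N}" and i: "i \<in> {1..N}"
  shows "cF N mu p i = sF N mu p i + mu i"
proof -
  have "{j\<in>{1..N}. p j \<le> p i} = insert i {j\<in>{1..N}. p j < p i}"
  proof -
    have inj: "\<And>x. x\<in>{1..N} \<Longrightarrow> p x = p i \<Longrightarrow> x = i"
      using permutes_inj_on[OF p] i by (meson inj_onD)
    show ?thesis using inj i by (auto simp del: atLeastAtMost_iff) (meson le_neq_implies_less)
  qed
  then show ?thesis unfolding cF_def sF_def by simp
qed

lemma cF_le_sF:
  assumes d: "is_distribution N mu" and "p i < p k"
  shows "cF N mu p i \<le> sF N mu p k"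
  unfolding cF_def sF_def
  by (rule sum_mono2) (use d assms(2) in \<open>auto simp: is_distribution_def\<close>)

lemma pred_exists:
  assumes p: "p permutes {1..N}" and d: "is_distribution N mu" and u: "0 < u"
    and y: "y \<in> {1..N}" and h: "u \<le> sF N mu p y"
  shows "\<exists>z\<in>{1..N}. p z < p y \<and> u \<le> cF N mu p z"
proof -
  define B where "B = {j\<in>{1..N}. p j < p y}"
  have "B \<noteq> {}"
  proof
    assume "B = {}" then have "sF N mu p y = 0" unfolding sF_def B_def[symmetric] by simp
    then show False using u h by simp
  qed
  then have "Max (p ` B) \<in> p ` B" by (intro Max_in) (auto simp: B_def)
  then obtain z where z: "z \<in> B" "p z = Max (p ` B)" by auto
  have "{j\<in>{1..N}. p j \<le> p z} = B"
  proof
    show "{j\<in>{1..N}. p j \<le> p z} \<subseteq> B" using z unfolding B_def by auto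
    show "B \<subseteq> {j\<in>{1..N}. p j \<le> p z}" using z(2) by (auto simp: B_def)
  qed
  then have "cF N mu p z = sF N mu p y" unfolding cF_def sF_def B_def by simp
  moreover have "z \<in> {1..N}" "p z < p y" using z(1) unfolding B_def by auto
  ultimately show ?thesis using h by auto
qed

lemma Gamma_char:
  assumes p: "p permutes {1..N}" and N: "N \<ge> 1" and d: "is_distribution N mu"
    and u: "0 < u" "u \<le> 1" and y: "y \<in> {1..N}"
  shows "Gamma N (u,p) mu = y \<longleftrightarrow> sF N mu p y < u \<and> u \<le> sF N mu p y + mu y"
proof -
  obtain i where i: "i \<in> {1..N}" "Gamma N (u,p) mu = i" "u \<le> cF N mu p i"
    "\<And>k. k \<in> {1..N} \<Longrightarrow> u \<le> cF N mu p k \<Longrightarrow> p i \<le> p k"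
    using Gamma_min[OF p N d u(2)] by blast
  show ?thesis
  proof
    assume "Gamma N (u,p) mu = y"
    then have iy: "i = y" using i by simp
    have "\<not> u \<le> sF N mu p y"
    proof
      assume "u \<le> sF N mu p y"
      then obtain z where "z\<in>{1..N}" "p z < p y" "u \<le> cF N mu p z"
        using pred_exists[OF p d u(1) y] by blast
      then show False using i(4) iy by force
    qed
    then show "sF N mu p y < u \<and> u \<le> sF N mu p y + mu y"
      using i(3) iy cF_split[OF p y] by simp
  next
    assume h: "sF N mu p y < u \<and> u \<le> sF N mu p y + mu y"
    then have "p i \<le> p y" using i(4)[OF y] cF_split[OF p y] by simp
    moreover have "\<not> p i < p y"
      using cF_le_sF[OF d, of p i y] h i(3) by auto
    ultimately have "p i = p y" by simp
    then have "i = y" using permutes_inj_on[OF p] i(1) y by (auto simp: inj_on_def)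
    then show "Gamma N (u,p) mu = y" using i by simp
  qed
qed

lemma Gamma_good:
  assumes p: "p permutes {1..N}" and N: "N \<ge> 1" and d: "is_distribution N mu"
    and u: "0 < u" "u \<le> 1" and Z: "u \<notin> (\<lambda>T. sum mu T) ` Pow {1..N}"
  shows "Gamma N (u,p) mu \<in> {1..N} \<and> mu (Gamma N (u,p) mu) > 0"
proof -
  obtain i where i: "i \<in> {1..N}" "Gamma N (u,p) mu = i" "u \<le> cF N mu p i"
    "\<And>k. k \<in> {1..N} \<Longrightarrow> u \<le> cF N mu p k \<Longrightarrow> p i \<le> p k"
    using Gamma_min[OF p N d u(2)] by blast
  have "cF N mu p i \<in> (\<lambda>T. sum mu T) ` Pow {1..N}" unfolding cF_def by auto
  then have lt: "u < cF N mu p i" using Z i(3) by (cases "u = cF N mu p i") auto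
  have "mu i > 0"
  proof (rule ccontr)
    assume "\<not> mu i > 0"
    then have "mu i = 0" using d i(1) unfolding is_distribution_def by force
    then have "u \<le> sF N mu p i" using lt cF_split[OF p i(1)] by simp
    then obtain z where "z\<in>{1..N}" "p z < p i" "u \<le> cF N mu p z"
      using pred_exists[OF p d u(1) i(1)] by blast
    then show False using i(4) by force
  qed
  then show ?thesis using i by simp
qed



lemma perms_fin: "finite (perms N)"
  unfolding perms_def using finite_permutations[of "{1..N}"] by simp

lemma perms_ne: "perms N \<noteq> {}"
  unfolding perms_def using permutes_id[of "{1..N}"] by blast

lemma M1_eq: "uniform_measure lborel {0..1::real} = density lborel (\<lambda>x. ennreal (indicator {0..1} x))"
  unfolding uniform_measure_def by (simp add: ennreal_indicator divide_ennreal_def)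

lemma ps1: "prob_space (uniform_measure lborel {0..1::real})"
  by (rule prob_space_uniform_measure) simp_all

lemma pps: "pair_prob_space (uniform_measure lborel {0..1::real}) (measure_pmf (pmf_of_set (perms N)))"
  by (simp add: pair_prob_space_def pair_sigma_finite_def ps1 prob_space_imp_sigma_finite
      prob_space_measure_pmf)

lemma space_UPi[simp]: "space (UPi N) = UNIV"
  unfolding UPi_def by (simp add: space_pair_measure)

lemma AE_good:
  assumes "finite Z"
  shows "AE w in UPi N. fst w \<in> {0<..1} \<and> fst w \<notin> Z \<and> snd w \<in> perms N"
proof -
  interpret pair_prob_space "uniform_measure lborel {0..1::real}" "measure_pmf (pmf_of_set (perms N))"
    by (rule pps)
  define G where "G = {0<..1::real} - Z"
  have G: "G \<in> sets borel" unfolding G_def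
    using sets.Diff[OF _ borel_closed[OF finite_imp_closed[OF assms]], of "{0<..1}"] by simp
  have "{w \<in> space (UPi N). fst w \<in> G \<and> snd w \<in> perms N} = G \<times> perms N" by auto
  moreover have "G \<times> perms N \<in> sets (UPi N)" unfolding UPi_def
    by (rule pair_measureI) (use G in simp_all)
  ultimately have S: "{w \<in> space (UPi N). fst w \<in> G \<and> snd w \<in> perms N} \<in> sets (UPi N)" by simp
  have "AE x in lborel. \<forall>z\<in>insert 0 Z. x \<noteq> z"
    by (rule AE_finite_allI) (use assms AE_lborel_singleton in auto)
  then have "AE x in lborel. x \<in> {0..1} \<longrightarrow> x \<in> G" unfolding G_def by eventually_elim auto
  then have aeG: "AE x in uniform_measure lborel {0..1::real}. x \<in> G"
    by (intro AE_uniform_measureI) auto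
  have aeP: "AE y in measure_pmf (pmf_of_set (perms N)). y \<in> perms N"
    using perms_fin perms_ne by (simp add: AE_measure_pmf_iff)
  have "AE x in uniform_measure lborel {0..1::real}. AE y in measure_pmf (pmf_of_set (perms N)).
      fst (x,y) \<in> G \<and> snd (x,y) \<in> perms N"
    by (rule eventually_mono[OF aeG], rule eventually_mono[OF aeP]) simp
  then have "AE w in UPi N. fst w \<in> G \<and> snd w \<in> perms N"
    unfolding UPi_def by (intro AE_pair_measure) (use S in \<open>simp_all add: UPi_def\<close>)
  then show ?thesis unfolding G_def by eventually_elim auto
qed



lemma fst_meas: "fst \<in> UPi N \<rightarrow>\<^sub>M borel"
proof -
  have "fst \<in> UPi N \<rightarrow>\<^sub>M uniform_measure lborel {0..1::real}"
    unfolding UPi_def by (rule measurable_fst)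
  then show ?thesis
    by (subst (asm) measurable_cong_sets[OF refl, where N'=borel]) auto
qed

lemma snd_meas: "(\<lambda>w. h (snd w)) \<in> UPi N \<rightarrow>\<^sub>M (borel :: real measure)"
  unfolding UPi_def by (rule measurable_compose[OF measurable_snd]) simp

lemma sF_bounds:
  assumes p: "p permutes {1..N}" and d: "is_distribution N mu" and y: "y \<in> {1..N}"
  shows "0 \<le> sF N mu p y" "sF N mu p y + mu y \<le> 1" "0 \<le> mu y"
proof -
  show "0 \<le> sF N mu p y" unfolding sF_def using d by (intro sum_nonneg) (auto simp: is_distribution_def)
  have "cF N mu p y \<le> (\<Sum>j\<in>{1..N}. mu j)" unfolding cF_def
    using d by (intro sum_mono2) (auto simp: is_distribution_def)
  then show "sF N mu p y + mu y \<le> 1" using cF_split[OF p y] d by (simp add: is_distribution_def)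
  show "0 \<le> mu y" using d y by (simp add: is_distribution_def)
qed

lemma inner_int:
  fixes f F :: "real \<Rightarrow> real" and c :: real
  assumes p: "p permutes {1..N}" and N: "N \<ge> 1" and d: "is_distribution N mu" and y: "y \<in> {1..N}"
    and fm: "f \<in> borel_measurable borel" and fc: "continuous_on UNIV f"
    and F: "\<And>x. (F has_real_derivative f x) (at x)"
  shows "(\<integral>u. indicator {w. Gamma N w mu = y} (u,p) * (f u * c) \<partial>uniform_measure lborel {0..1})
       = (F (sF N mu p y + mu y) - F (sF N mu p y)) * c"
proof -
  define s where "s = sF N mu p y"
  define m where "m = mu y"
  note b = sF_bounds[OF p d y, folded s_def m_def]
  define B where "B = {u. Gamma N (u,p) mu = y}"
  have Bs: "B \<in> sets borel"
    using measurable_sets[OF Gamma_u_meas[of N p mu], of "{y}"] unfolding B_def by (simp add: vimage_def)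
  have ind: "indicator {w. Gamma N w mu = y} (u,p) = (indicator B u :: real)" for u
    unfolding B_def by (simp add: indicator_def)
  have "(\<integral>u. indicator {w. Gamma N w mu = y} (u,p) * (f u * c) \<partial>uniform_measure lborel {0..1})
      = (\<integral>u. indicator B u * (f u * c) \<partial>density lborel (\<lambda>x. ennreal (indicator {0..1} x)))"
    unfolding M1_eq ind ..
  also have "\<dots> = (\<integral>u. indicator {0..1} u *\<^sub>R (indicator B u * (f u * c)) \<partial>lborel)"
    by (rule integral_density) (use Bs fm in auto)
  also have "\<dots> = (\<integral>u. (indicator {s..s+m} u *\<^sub>R f u) * c \<partial>lborel)"
  proof (rule integral_cong_AE)
    show "(\<lambda>u. indicator {0..1} u *\<^sub>R (indicator B u * (f u * c))) \<in> borel_measurable lborel"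
      using Bs fm by auto
    show "(\<lambda>u. (indicator {s..s+m} u *\<^sub>R f u) * c) \<in> borel_measurable lborel"
      using fm by auto
    have "AE u in lborel. \<forall>z\<in>{0, s}. u \<noteq> z"
      by (rule AE_finite_allI) (use AE_lborel_singleton in auto)
    then show "AE u in lborel. indicator {0..1} u *\<^sub>R (indicator B u * (f u * c))
               = (indicator {s..s+m} u *\<^sub>R f u) * c"
    proof eventually_elim
      case (elim u)
      have key: "indicator {0..1} u * indicator B u = (indicator {s..s+m} u :: real)"
      proof (cases "0 < u \<and> u \<le> 1")
        case True
        then have "u \<in> B \<longleftrightarrow> s < u \<and> u \<le> s + m"
          unfolding B_def s_def m_def using Gamma_char[OF p N d _ _ y] by blast
        then show ?thesis using True elim by (auto simp: indicator_def)
      next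
        case False
        then show ?thesis using b elim by (auto simp: indicator_def)
      qed
      show ?case using key by (simp add: algebra_simps)
    qed
  qed
  also have "\<dots> = (\<integral>u. indicator {s..s+m} u *\<^sub>R f u \<partial>lborel) * c"
    by (rule integral_mult_left_zero)
  also have "(\<integral>u. indicator {s..s+m} u *\<^sub>R f u \<partial>lborel) = F (s+m) - F s"
  proof (rule integral_FTC_atLeastAtMost)
    show "s \<le> s + m" using b by simp
    show "(F has_vector_derivative f x) (at x within {s..s+m})" for x
      using F has_real_derivative_iff_has_vector_derivative has_vector_derivative_at_within by blast
    show "continuous_on {s..s+m} f" using fc continuous_on_subset by blast
  qed
  finally show ?thesis unfolding s_def m_def .
qed



lemma ps_UPi: "prob_space (UPi N)"
  unfolding UPi_def by (intro prob_space_pair ps1 prob_space_measure_pmf)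

lemma int_formula:
  fixes f F :: "real \<Rightarrow> real" and h :: "(nat \<Rightarrow> nat) \<Rightarrow> real"
  assumes N: "N \<ge> 1" and d: "is_distribution N mu" and y: "y \<in> {1..N}"
    and fm: "f \<in> borel_measurable borel" and fc: "continuous_on UNIV f"
    and F: "\<And>x. (F has_real_derivative f x) (at x)"
    and fb: "\<And>u. u \<in> {0..1} \<Longrightarrow> \<bar>f u\<bar> \<le> 1"
  shows "(\<integral>w. indicator {w. Gamma N w mu = y} w * (f (fst w) * h (snd w)) \<partial>UPi N)
        = (\<Sum>p\<in>perms N. (F (sF N mu p y + mu y) - F (sF N mu p y)) * h p) / card (perms N)"
proof -
  interpret pair_prob_space "uniform_measure lborel {0..1::real}" "measure_pmf (pmf_of_set (perms N))"
    by (rule pps)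
  interpret U: prob_space "UPi N" by (rule ps_UPi)
  define A where "A = {w. Gamma N w mu = y}"
  have As: "A \<in> sets (UPi N)"
    using measurable_sets[OF Gamma_meas[of N mu], of "{y}"] unfolding A_def by (simp add: vimage_def)
  define g where "g = (\<lambda>u p. indicator A (u,p) * (f u * h p))"
  have gm: "(\<lambda>w. indicator A w * (f (fst w) * h (snd w))) \<in> borel_measurable (UPi N)"
    by (intro borel_measurable_times borel_measurable_indicator[OF As]
        measurable_compose[OF fst_meas fm] snd_meas)
  have bound: "AE w in UPi N. norm (indicator A w * (f (fst w) * h (snd w))) \<le> (\<Sum>p\<in>perms N. \<bar>h p\<bar>)"
    using AE_good[of "{}" N, OF finite.emptyI]
  proof eventually_elim
    case (elim w)
    then have f1: "\<bar>f (fst w)\<bar> \<le> 1" by (intro fb) auto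
    have h1: "\<bar>h (snd w)\<bar> \<le> (\<Sum>p\<in>perms N. \<bar>h p\<bar>)"
      using elim perms_fin by (intro member_le_sum) auto
    have "\<bar>f (fst w)\<bar> * \<bar>h (snd w)\<bar> \<le> 1 * \<bar>h (snd w)\<bar>"
      by (rule mult_right_mono[OF f1]) simp
    then have "\<bar>f (fst w) * h (snd w)\<bar> \<le> (\<Sum>p\<in>perms N. \<bar>h p\<bar>)"
      using h1 by (simp add: abs_mult)
    then show ?case by (auto simp: indicator_def)
  qed
  have int: "integrable (UPi N) (\<lambda>w. indicator A w * (f (fst w) * h (snd w)))"
    by (rule U.integrable_const_bound[OF bound gm])
  have cp: "(\<lambda>w. indicator A w * (f (fst w) * h (snd w))) = case_prod g"
    by (auto simp: g_def fun_eq_iff split: prod.split)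
  have int2: "integrable (uniform_measure lborel {0..1::real} \<Otimes>\<^sub>M measure_pmf (pmf_of_set (perms N))) (case_prod g)"
    using int unfolding cp UPi_def .
  have "(\<integral>w. indicator A w * (f (fst w) * h (snd w)) \<partial>UPi N)
      = integral\<^sup>L (uniform_measure lborel {0..1::real} \<Otimes>\<^sub>M measure_pmf (pmf_of_set (perms N))) (case_prod g)"
    unfolding cp UPi_def ..
  also have "\<dots> = (\<integral>p. (\<integral>u. g u p \<partial>uniform_measure lborel {0..1::real}) \<partial>measure_pmf (pmf_of_set (perms N)))"
    by (rule integral_snd[OF int2, symmetric])
  also have "\<dots> = (\<Sum>p\<in>perms N. (\<integral>u. g u p \<partial>uniform_measure lborel {0..1::real})) / card (perms N)"
    by (rule integral_pmf_of_set[OF perms_ne perms_fin])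
  also have "\<dots> = (\<Sum>p\<in>perms N. (F (sF N mu p y + mu y) - F (sF N mu p y)) * h p) / card (perms N)"
  proof (intro arg_cong2[where f="(/)"] sum.cong refl)
    fix p assume "p \<in> perms N"
    then have p: "p permutes {1..N}" by (simp add: perms_def)
    show "(\<integral>u. g u p \<partial>uniform_measure lborel {0..1::real}) = (F (sF N mu p y + mu y) - F (sF N mu p y)) * h p"
      unfolding g_def A_def by (rule inner_int[OF p N d y fm fc F])
  qed
  finally show ?thesis unfolding A_def .
qed



lemma perm_comp_swap:
  assumes "a permutes {1..N}" "j \<in> {1..N}" "j' \<in> {1..N}"
  shows "a \<circ> Transposition.transpose j j' permutes {1..N}"
  using permutes_compose[OF permutes_swap_id[OF assms(2,3)] assms(1)] .

lemma comp_swap_inv: "(a \<circ> Transposition.transpose j j') \<circ> Transposition.transpose j j' = a"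
  by (simp add: comp_assoc)

lemma sum_perm_swap:
  fixes \<phi> :: "nat \<Rightarrow> real"
  assumes y: "y \<in> {1..N}" and y': "y' \<in> {1..N}"
  shows "(\<Sum>p\<in>perms N. \<phi> (p y')) = (\<Sum>p\<in>perms N. \<phi> (p y))"
proof (rule sum.reindex_bij_witness[where i="\<lambda>p. p \<circ> Transposition.transpose y y'" and j="\<lambda>p. p \<circ> Transposition.transpose y y'"])
  fix a assume a: "a \<in> perms N"
  show "a \<circ> Transposition.transpose y y' \<circ> Transposition.transpose y y' = a" by (rule comp_swap_inv)
  show "a \<circ> Transposition.transpose y y' \<in> perms N" using perm_comp_swap[OF _ y y', of a] a by (simp add: perms_def)
  show "a \<circ> Transposition.transpose y y' \<circ> Transposition.transpose y y' = a" by (rule comp_swap_inv)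
  show "a \<circ> Transposition.transpose y y' \<in> perms N" using perm_comp_swap[OF _ y y', of a] a by (simp add: perms_def)
  show "\<phi> ((a \<circ> Transposition.transpose y y') y) = \<phi> (a y')" by simp
qed

lemma sum_perm_avg:
  fixes \<phi> :: "nat \<Rightarrow> real"
  assumes y: "y \<in> {1..N}"
  shows "real N * (\<Sum>p\<in>perms N. \<phi> (p y)) = real (card (perms N)) * (\<Sum>k\<in>{1..N}. \<phi> k)"
proof -
  have "real N * (\<Sum>p\<in>perms N. \<phi> (p y)) = (\<Sum>y'\<in>{1..N}. (\<Sum>p\<in>perms N. \<phi> (p y)))"
    by simp
  also have "\<dots> = (\<Sum>y'\<in>{1..N}. (\<Sum>p\<in>perms N. \<phi> (p y')))"
    by (rule sum.cong[OF refl]) (rule sum_perm_swap[OF y, symmetric])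
  also have "\<dots> = (\<Sum>p\<in>perms N. (\<Sum>y'\<in>{1..N}. \<phi> (p y')))"
    by (rule sum.swap)
  also have "\<dots> = (\<Sum>p\<in>perms N. (\<Sum>k\<in>{1..N}. \<phi> k))"
  proof (rule sum.cong[OF refl])
    fix p assume "p \<in> perms N"
    then have p: "p permutes {1..N}" by (simp add: perms_def)
    show "(\<Sum>y'\<in>{1..N}. \<phi> (p y')) = (\<Sum>k\<in>{1..N}. \<phi> k)"
      using sum.permute[OF p, of \<phi>] by (simp add: comp_def)
  qed
  also have "\<dots> = real (card (perms N)) * (\<Sum>k\<in>{1..N}. \<phi> k)" by simp
  finally show ?thesis .
qed

lemma sum_perm_swap2:
  fixes \<phi> :: "nat \<Rightarrow> real"
  assumes y: "y \<in> {1..N}" and j: "j \<in> {1..N} - {y}" and j': "j' \<in> {1..N} - {y}"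
  shows "(\<Sum>p\<in>perms N. \<phi> (p y) * (if p j' < p y then 1 else 0))
       = (\<Sum>p\<in>perms N. \<phi> (p y) * (if p j < p y then 1 else 0))"
proof (rule sum.reindex_bij_witness[where i="\<lambda>p. p \<circ> Transposition.transpose j j'" and j="\<lambda>p. p \<circ> Transposition.transpose j j'"])
  fix a assume a: "a \<in> perms N"
  have jj: "j \<in> {1..N}" "j' \<in> {1..N}" using j j' by auto
  show "a \<circ> Transposition.transpose j j' \<circ> Transposition.transpose j j' = a" by (rule comp_swap_inv)
  show "a \<circ> Transposition.transpose j j' \<in> perms N" using perm_comp_swap[OF _ jj, of a] a by (simp add: perms_def)
  show "a \<circ> Transposition.transpose j j' \<circ> Transposition.transpose j j' = a" by (rule comp_swap_inv)
  show "a \<circ> Transposition.transpose j j' \<in> perms N" using perm_comp_swap[OF _ jj, of a] a by (simp add: perms_def)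
  have "Transposition.transpose j j' y = y" using j j' by (auto simp: transpose_apply_other)
  then show "\<phi> ((a \<circ> Transposition.transpose j j') y) * (if (a \<circ> Transposition.transpose j j') j < (a \<circ> Transposition.transpose j j') y then 1 else 0)
     = \<phi> (a y) * (if a j' < a y then 1 else 0)" by simp
qed

lemma count_less:
  assumes p: "p permutes {1..N}" and y: "y \<in> {1..N}"
  shows "card {j\<in>{1..N}. p j < p y} = p y - 1"
proof -
  have pin: "p j \<in> {1..N}" if "j \<in> {1..N}" for j using permutes_in_image[OF p, of j] that by blast
  have py: "p y \<le> N" using pin[OF y] by simp
  have "p ` {j\<in>{1..N}. p j < p y} = {1..<p y}"
  proof
    show "p ` {j\<in>{1..N}. p j < p y} \<subseteq> {1..<p y}"
    proof
      fix k assume "k \<in> p ` {j\<in>{1..N}. p j < p y}"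
      then obtain j where "j \<in> {1..N}" "p j < p y" "k = p j" by blast
      then show "k \<in> {1..<p y}" using pin[of j] by auto
    qed
    show "{1..<p y} \<subseteq> p ` {j\<in>{1..N}. p j < p y}"
    proof
      fix k assume k: "k \<in> {1..<p y}"
      then have kN: "k \<in> {1..N}" using py by auto
      have "inv p k \<in> {1..N}" using permutes_in_image[OF permutes_inv[OF p], of k] kN by blast
      moreover have "p (inv p k) = k" using permutes_inverses(1)[OF p] by simp
      ultimately show "k \<in> p ` {j\<in>{1..N}. p j < p y}" using k by force
    qed
  qed
  moreover have "inj_on p {j\<in>{1..N}. p j < p y}"
    using permutes_inj_on[OF p] by (rule inj_on_subset) auto
  ultimately have "card {j\<in>{1..N}. p j < p y} = card {1..<p y}"
    by (metis card_image)
  then show ?thesis by simp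
qed

lemma sum_phi_sF:
  fixes \<phi> :: "nat \<Rightarrow> real"
  assumes N: "N \<ge> 2" and d: "is_distribution N mu" and y: "y \<in> {1..N}"
  shows "(\<Sum>p\<in>perms N. \<phi> (p y) * sF N mu p y) = (1 - mu y) * (\<Sum>p\<in>perms N. \<phi> (p y) * eta N (p y))"
proof -
  define R where "R = {1..N} - {y}"
  define Ind where "Ind p j = (if p j < p y then 1 else 0 :: real)" for p :: "nat \<Rightarrow> nat" and j
  define Q where "Q j = (\<Sum>p\<in>perms N. \<phi> (p y) * Ind p j)" for j
  have finR: "finite R" unfolding R_def by simp
  have cR: "card R = N - 1" unfolding R_def using y by simp
  have sF_eq: "sF N mu p y = (\<Sum>j\<in>R. mu j * Ind p j)" for p
  proof -
    have "sF N mu p y = (\<Sum>j\<in>{1..N}. if p j < p y then mu j else 0)"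
      unfolding sF_def by (rule sum.inter_filter) simp
    also have "\<dots> = (\<Sum>j\<in>R. if p j < p y then mu j else 0)"
      unfolding R_def by (rule sum.mono_neutral_right) auto
    also have "\<dots> = (\<Sum>j\<in>R. mu j * Ind p j)" unfolding Ind_def by (rule sum.cong) auto
    finally show ?thesis .
  qed
  have "(\<Sum>p\<in>perms N. \<phi> (p y) * sF N mu p y) = (\<Sum>p\<in>perms N. \<Sum>j\<in>R. mu j * (\<phi> (p y) * Ind p j))"
    unfolding sF_eq by (simp add: sum_distrib_left mult.left_commute)
  also have "\<dots> = (\<Sum>j\<in>R. mu j * Q j)"
    unfolding Q_def by (subst sum.swap) (simp add: sum_distrib_left)
  finally have e1: "(\<Sum>p\<in>perms N. \<phi> (p y) * sF N mu p y) = (\<Sum>j\<in>R. mu j * Q j)" .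
  define W where "W = (\<Sum>p\<in>perms N. \<phi> (p y) * eta N (p y))"
  have QW: "Q j = W" if j: "j \<in> R" for j
  proof -
    have "real (N - 1) * Q j = (\<Sum>j'\<in>R. Q j)" using cR by simp
    also have "\<dots> = (\<Sum>j'\<in>R. Q j')"
      by (rule sum.cong[OF refl]) (unfold Q_def Ind_def, rule sum_perm_swap2[OF y], use j R_def in auto)
    also have "\<dots> = (\<Sum>p\<in>perms N. \<phi> (p y) * (\<Sum>j'\<in>R. Ind p j'))"
      unfolding Q_def by (subst sum.swap) (simp add: sum_distrib_left)
    also have "\<dots> = (\<Sum>p\<in>perms N. \<phi> (p y) * (real (p y) - 1))"
    proof (rule sum.cong[OF refl])
      fix p assume "p \<in> perms N"
      then have p: "p permutes {1..N}" by (simp add: perms_def)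
      have py: "p y \<ge> 1" using permutes_in_image[OF p, of y] y by auto
      have "(\<Sum>j'\<in>R. Ind p j') = real (card {j\<in>R. p j < p y})"
        unfolding Ind_def using finR by (simp add: sum.If_cases Int_def)
      also have "{j\<in>R. p j < p y} = {j\<in>{1..N}. p j < p y}" unfolding R_def by auto
      also have "real (card \<dots>) = real (p y) - 1" using count_less[OF p y] py by simp
      finally show "\<phi> (p y) * (\<Sum>j'\<in>R. Ind p j') = \<phi> (p y) * (real (p y) - 1)" by simp
    qed
    also have "\<dots> = real (N - 1) * W"
      unfolding W_def eta_def sum_distrib_left using N by (intro sum.cong refl) (simp add: field_simps)
    finally show ?thesis using N by simp
  qed
  have "(\<Sum>j\<in>R. mu j * Q j) = (\<Sum>j\<in>R. mu j) * W"
    using QW by (simp add: sum_distrib_right)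
  also have "(\<Sum>j\<in>R. mu j) = 1 - mu y"
    using d y unfolding R_def is_distribution_def by (simp add: sum_diff1)
  finally show ?thesis using e1 W_def by simp
qed



lemma C0_eq:
  assumes N: "N \<ge> 2"
  shows "C0 N = (\<Sum>k\<in>{1..N}. (eta N k - (\<Sum>k\<in>{1..N}. eta N k) / N)^2) / N"
  unfolding C0_def using N by (simp add: integral_pmf_of_set)

lemma C0_alt:
  assumes N: "N \<ge> 2"
  shows "C0 N = (\<Sum>k\<in>{1..N}. eta N k * eta N k) / N - ((\<Sum>k\<in>{1..N}. eta N k) / N)^2"
proof -
  define E where "E = (\<Sum>k\<in>{1..N}. eta N k) / N"
  have NN: "real N \<noteq> 0" using N by simp
  have "(\<Sum>k\<in>{1..N}. (eta N k - E)^2) = (\<Sum>k\<in>{1..N}. eta N k * eta N k) - 2 * E * (\<Sum>k\<in>{1..N}. eta N k) + N * E^2"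
    by (simp add: power2_diff sum.distrib sum_subtractf sum_distrib_left power2_eq_square algebra_simps)
  also have "(\<Sum>k\<in>{1..N}. eta N k) = N * E" unfolding E_def using NN by simp
  finally have "(\<Sum>k\<in>{1..N}. (eta N k - E)^2) = (\<Sum>k\<in>{1..N}. eta N k * eta N k) - N * E^2"
    by (simp add: power2_eq_square)
  then show ?thesis unfolding C0_eq[OF N] E_def[symmetric] using NN by (simp add: field_simps)
qed

lemma C0_pos:
  assumes N: "N \<ge> 2"
  shows "C0 N > 0"
proof -
  define E where "E = (\<Sum>k\<in>{1..N}. eta N k) / N"
  have nn: "\<forall>k\<in>{1..N}. 0 \<le> (eta N k - E)^2" by simp
  have "(\<Sum>k\<in>{1..N}. (eta N k - E)^2) \<noteq> 0"
  proof
    assume "(\<Sum>k\<in>{1..N}. (eta N k - E)^2) = 0"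
    then have "\<forall>k\<in>{1..N}. (eta N k - E)^2 = 0" using sum_nonneg_eq_0_iff[of "{1..N}" "\<lambda>k. (eta N k - E)^2"] by simp
    then have "eta N 1 = E" "eta N N = E" using N by auto
    moreover have "eta N 1 = 0" "eta N N = 1" using N by (auto simp: eta_def)
    ultimately show False by simp
  qed
  moreover have "(\<Sum>k\<in>{1..N}. (eta N k - E)^2) \<ge> 0" by (rule sum_nonneg) simp
  ultimately have "(\<Sum>k\<in>{1..N}. (eta N k - E)^2) > 0" by simp
  then show ?thesis unfolding C0_eq[OF N] E_def[symmetric] using N by simp
qed

lemma deriv_id: "((\<lambda>x::real. x) has_real_derivative 1) (at x)"
  by (rule DERIV_ident)

lemma deriv_sq: "((\<lambda>x::real. x^2/2) has_real_derivative x) (at x)"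
  by (auto intro!: derivative_eq_intros)

lemma key:
  assumes N: "N \<ge> 2" and d: "is_distribution N mu" and y: "y \<in> {1..N}" and m0: "mu y > 0"
  shows "(1 / C0 N) * cond_cov (UPi N) (\<lambda>w. fst w) (\<lambda>w. eta N (snd w (Gamma N w mu)))
                           (\<lambda>w. Gamma N w mu) y = 1 - mu y"
proof -
  have N1: "N \<ge> 1" using N by simp
  define m where "m = mu y"
  define A where "A = {w. Gamma N w mu = y}"
  have A: "{w \<in> space (UPi N). Gamma N w mu = y} = A" unfolding A_def by simp
  define n where "n = real (card (perms N))"
  have n0: "n > 0" unfolding n_def using perms_fin perms_ne by (simp add: card_gt_0_iff)
  define S where "S p = sF N mu p y" for p
  define H1 where "H1 = (\<Sum>p\<in>perms N. eta N (p y))"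
  define H2 where "H2 = (\<Sum>p\<in>perms N. eta N (p y) * eta N (p y))"
  have T1: "(\<Sum>p\<in>perms N. S p) = (1 - m) * H1"
    using sum_phi_sF[OF N d y, of "\<lambda>_. 1"] unfolding S_def m_def H1_def by simp
  have T2: "(\<Sum>p\<in>perms N. eta N (p y) * S p) = (1 - m) * H2"
    using sum_phi_sF[OF N d y, of "eta N"] unfolding S_def m_def H2_def by simp
  have sq: "(s + m)^2/2 - s^2/2 = m * s + m^2/2" for s :: real
    by (simp add: power2_eq_square algebra_simps)
  note IF = int_formula[OF N1 d y]
  have cont1: "continuous_on UNIV (\<lambda>u::real. 1)" "continuous_on UNIV (\<lambda>u::real. u)"
    by (auto intro: continuous_intros)
  have "measure (UPi N) A = (\<integral>w. indicator A w * ((\<lambda>u. 1) (fst w) * (\<lambda>p. 1) (snd w)) \<partial>UPi N)"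
    by simp
  also have "\<dots> = (\<Sum>p\<in>perms N. ((S p + m) - S p) * 1) / n"
    unfolding A_def S_def m_def n_def
    by (rule IF[where F="\<lambda>x. x"]) (use cont1 deriv_id in auto)
  also have "\<dots> = m" using n0 by (simp add: n_def)
  finally have I1: "measure (UPi N) A = m" .
  have IU: "(\<integral>w. indicator A w * fst w \<partial>UPi N) = (m * ((1 - m) * H1) + m^2/2 * n) / n"
  proof -
    have "(\<integral>w. indicator A w * fst w \<partial>UPi N) = (\<integral>w. indicator A w * ((\<lambda>u. u) (fst w) * (\<lambda>p. 1) (snd w)) \<partial>UPi N)"
      by simp
    also have "\<dots> = (\<Sum>p\<in>perms N. ((S p + m)^2/2 - (S p)^2/2) * 1) / n"
      unfolding A_def S_def m_def n_def
      by (rule IF[where F="\<lambda>x. x^2/2"]) (use cont1 deriv_sq in auto)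
    also have "\<dots> = (m * (\<Sum>p\<in>perms N. S p) + m^2/2 * n) / n"
      unfolding sq by (simp add: sum.distrib sum_distrib_left n_def)
    finally show ?thesis unfolding T1 .
  qed
  have IE: "(\<integral>w. indicator A w * eta N (snd w (Gamma N w mu)) \<partial>UPi N) = m * H1 / n"
  proof -
    have "(\<integral>w. indicator A w * eta N (snd w (Gamma N w mu)) \<partial>UPi N)
        = (\<integral>w. indicator A w * ((\<lambda>u. 1) (fst w) * (\<lambda>p. eta N (p y)) (snd w)) \<partial>UPi N)"
      by (rule Bochner_Integration.integral_cong[OF refl]) (auto simp: A_def indicator_def)
    also have "\<dots> = (\<Sum>p\<in>perms N. ((S p + m) - S p) * eta N (p y)) / n"
      unfolding A_def S_def m_def n_def
      by (rule IF[where F="\<lambda>x. x"]) (use cont1 deriv_id in auto)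
    also have "\<dots> = m * H1 / n" by (simp add: H1_def sum_distrib_left)
    finally show ?thesis .
  qed
  have IUE: "(\<integral>w. indicator A w * (fst w * eta N (snd w (Gamma N w mu))) \<partial>UPi N)
             = (m * ((1 - m) * H2) + m^2/2 * H1) / n"
  proof -
    have "(\<integral>w. indicator A w * (fst w * eta N (snd w (Gamma N w mu))) \<partial>UPi N)
        = (\<integral>w. indicator A w * ((\<lambda>u. u) (fst w) * (\<lambda>p. eta N (p y)) (snd w)) \<partial>UPi N)"
      by (rule Bochner_Integration.integral_cong[OF refl]) (auto simp: A_def indicator_def)
    also have "\<dots> = (\<Sum>p\<in>perms N. ((S p + m)^2/2 - (S p)^2/2) * eta N (p y)) / n"
      unfolding A_def S_def m_def n_def
      by (rule IF[where F="\<lambda>x. x^2/2"]) (use cont1 deriv_sq in auto)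
    also have "\<dots> = (m * (\<Sum>p\<in>perms N. eta N (p y) * S p) + m^2/2 * H1) / n"
      unfolding sq H1_def by (simp add: sum.distrib sum_distrib_left algebra_simps)
    finally show ?thesis unfolding T2 .
  qed
  have C0: "C0 N = H2 / n - (H1 / n)^2"
  proof -
    have a1: "real N * H1 = n * (\<Sum>k\<in>{1..N}. eta N k)"
      unfolding H1_def n_def by (rule sum_perm_avg[OF y])
    have a2: "real N * H2 = n * (\<Sum>k\<in>{1..N}. eta N k * eta N k)"
      unfolding H2_def n_def by (rule sum_perm_avg[OF y, of "\<lambda>k. eta N k * eta N k"])
    have NN: "real N > 0" using N by simp
    have "(\<Sum>k\<in>{1..N}. eta N k) / N = H1 / n" using a1 NN n0 by (simp add: field_simps)
    moreover have "(\<Sum>k\<in>{1..N}. eta N k * eta N k) / N = H2 / n" using a2 NN n0 by (simp add: field_simps)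
    ultimately show ?thesis using C0_alt[OF N] by simp
  qed
  have Cp: "C0 N > 0" by (rule C0_pos[OF N])
  have m0': "m > 0" using m0 m_def by simp
  have cov: "cond_cov (UPi N) (\<lambda>w. fst w) (\<lambda>w. eta N (snd w (Gamma N w mu))) (\<lambda>w. Gamma N w mu) y
        = (1 - m) * C0 N"
    unfolding cond_cov_def Let_def A cond_exp_event_def I1 IU IE IUE C0
    using m0' n0 by (simp add: field_simps power2_eq_square)
  show ?thesis unfolding cov m_def using Cp by simp
qed


theorem lemma9:
  fixes N :: nat and mu :: "nat \<Rightarrow> real"
  assumes "N \<ge> 2"
    and "is_distribution N mu"
  shows "AE w in UPi N.
           (1 / C0 N) * cond_cov (UPi N) (\<lambda>w. fst w) (\<lambda>w. eta N (snd w (Gamma N w mu)))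
                           (\<lambda>w. Gamma N w mu) (Gamma N w mu)
           = 1 - mu (Gamma N w mu)"
proof -
  have N1: "N \<ge> 1" using assms(1) by simp
  define Z where "Z = (\<lambda>T. sum mu T) ` Pow {1..N}"
  have fZ: "finite Z" unfolding Z_def by simp
  show ?thesis
    using AE_good[OF fZ, of N]
  proof eventually_elim
    case (elim w)
    have p: "snd w permutes {1..N}" using elim by (simp add: perms_def)
    have g: "Gamma N (fst w, snd w) mu \<in> {1..N} \<and> mu (Gamma N (fst w, snd w) mu) > 0"
    proof -
      have "0 < fst w" "fst w \<le> 1" "fst w \<notin> sum mu ` Pow {1..N}" using elim unfolding Z_def by auto
      then show ?thesis using Gamma_good[OF p N1 assms(2), of "fst w"] by blast
    qed
    then have "Gamma N w mu \<in> {1..N}" "mu (Gamma N w mu) > 0" by (simp_all add: prod.collapse)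
    then show ?case using key[OF assms(1,2)] by blast
  qed
qed

end
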